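(* Let $n$ be a positive integer. Then $\mathsf{QNAADT}(\mathsf{OMB}_n) = \Omega(n)$.
   Context: $\mathsf{OMB}_n:\{0,1\}^n\to\{0,1\}$ is defined by $\mathsf{OMB}_n(x)=1$ if $\max\{i\in[n]:x_i=0\}$ is odd and $0$ otherwise, with $\mathsf{OMB}_n(1^n)=0$. $\mathsf{AND}_S(x)=\prod_{i\in S}x_i$. A quantum non-adaptive AND decision tree of cost $c$ works on a state space $|S_1,\dots,S_c\rangle|b\rangle|w\rangle$ with $S_j\subseteq[n]$, $b\in\{0,1\}^c$ and an arbitrary workspace; it starts from an input-independent state $|\psi\rangle$, applies the oracle $O_x:|S_1,\dots,S_c\rangle|b_1,\dots,b_c\rangle|w\rangle\mapsto|S_1,\dots,S_c\rangle|b_1\oplus\mathsf{AND}_{S_1}(x),\dots,b_c\oplus\mathsf{AND}_{S_c}(x)\rangle|w\rangle$ once, and accepts with probability $\|\Pi O_x|\psi\rangle\|^2$ for a fixed projector $\Pi$. $\mathsf{QNAADT}(f)$ is the minimum cost of such a tree outputting $f(x)$ correctly with probability at least $2/3$ for every $x$. *)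

theory Defs
  imports Complex_Main
begin

text \<open>Inputs x in {0,1}^n are modelled as functions x :: nat => bool, only the
values on [n] = {1..n} being relevant; True encodes 1, False encodes 0.
Boolean functions f : {0,1}^n -> {0,1} are modelled as (nat => bool) => bool.\<close>

definition OMB :: "nat \<Rightarrow> (nat \<Rightarrow> bool) \<Rightarrow> bool" where
  "OMB n x = ((\<exists>i\<in>{1..n}. \<not> x i) \<and> odd (Max {i\<in>{1..n}. \<not> x i}))"

definition AND_S :: "nat set \<Rightarrow> (nat \<Rightarrow> bool) \<Rightarrow> bool" where
  "AND_S S x = (\<forall>i\<in>S. x i)"

text \<open>Computational basis states |S_1,...,S_c>|b>|w>, workspace w \<in> {0..<m}.\<close>
type_synonym qbasis = "nat set list \<times> bool list \<times> nat"

definition qbasis_set :: "nat \<Rightarrow> nat \<Rightarrow> nat \<Rightarrow> qbasis set" where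
  "qbasis_set n c m = {(Ss, b, w). length Ss = c \<and> (\<forall>S\<in>set Ss. S \<subseteq> {1..n})
      \<and> length b = c \<and> w < m}"

text \<open>The oracle O_x permutes basis states (it is an involution).\<close>
definition oracle_map :: "(nat \<Rightarrow> bool) \<Rightarrow> qbasis \<Rightarrow> qbasis" where
  "oracle_map x u = (case u of (Ss, b, w) \<Rightarrow>
      (Ss, map2 (\<lambda>S bj. bj \<noteq> AND_S S x) Ss b, w))"

definition apply_oracle :: "(nat \<Rightarrow> bool) \<Rightarrow> (qbasis \<Rightarrow> complex) \<Rightarrow> qbasis \<Rightarrow> complex" where
  "apply_oracle x \<psi> = \<psi> \<circ> oracle_map x"

definition is_unit_state :: "qbasis set \<Rightarrow> (qbasis \<Rightarrow> complex) \<Rightarrow> bool" where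
  "is_unit_state B \<psi> = ((\<forall>u. u \<notin> B \<longrightarrow> \<psi> u = 0) \<and> (\<Sum>u\<in>B. (cmod (\<psi> u))\<^sup>2) = 1)"

definition is_projector :: "qbasis set \<Rightarrow> (qbasis \<Rightarrow> qbasis \<Rightarrow> complex) \<Rightarrow> bool" where
  "is_projector B P = ((\<forall>u\<in>B. \<forall>v\<in>B. P u v = cnj (P v u)) \<and>
      (\<forall>u\<in>B. \<forall>v\<in>B. (\<Sum>w\<in>B. P u w * P w v) = P u v))"

definition mat_apply :: "qbasis set \<Rightarrow> (qbasis \<Rightarrow> qbasis \<Rightarrow> complex) \<Rightarrow> (qbasis \<Rightarrow> complex) \<Rightarrow> qbasis \<Rightarrow> complex" where
  "mat_apply B P \<phi> u = (\<Sum>v\<in>B. P u v * \<phi> v)"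

definition accept_prob :: "qbasis set \<Rightarrow> (qbasis \<Rightarrow> qbasis \<Rightarrow> complex) \<Rightarrow> (qbasis \<Rightarrow> complex) \<Rightarrow> (nat \<Rightarrow> bool) \<Rightarrow> real" where
  "accept_prob B P \<psi> x = (\<Sum>u\<in>B. (cmod (mat_apply B P (apply_oracle x \<psi>) u))\<^sup>2)"

text \<open>A cost-c quantum non-adaptive AND decision tree computing f on n bits
(bounded error 1/3): accepting means output 1.\<close>
definition qnaadt_computes :: "nat \<Rightarrow> ((nat \<Rightarrow> bool) \<Rightarrow> bool) \<Rightarrow> nat \<Rightarrow> bool" where
  "qnaadt_computes n f c = (\<exists>m \<psi> P.
      is_unit_state (qbasis_set n c m) \<psi> \<and> is_projector (qbasis_set n c m) P \<and>
      (\<forall>x. (f x \<longrightarrow> accept_prob (qbasis_set n c m) P \<psi> x \<ge> 2/3) \<and>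
           (\<not> f x \<longrightarrow> accept_prob (qbasis_set n c m) P \<psi> x \<le> 1/3)))"

definition QNAADT :: "nat \<Rightarrow> ((nat \<Rightarrow> bool) \<Rightarrow> bool) \<Rightarrow> nat" where
  "QNAADT n f = (LEAST c. qnaadt_computes n f c)"

end

theory Submission
  imports Defs
begin

lemma finite_qb: "finite (qbasis_set n c m)"
proof -
  have "qbasis_set n c m \<subseteq> {Ss. set Ss \<subseteq> Pow {1..n} \<and> length Ss = c} \<times>
        ({b. set b \<subseteq> (UNIV::bool set) \<and> length b = c} \<times> {..<m})"
    by (auto simp: qbasis_set_def)
  moreover have "finite ({Ss. set Ss \<subseteq> Pow {1..n} \<and> length Ss = c} \<times>
        ({b. set b \<subseteq> (UNIV::bool set) \<and> length b = c} \<times> {..<m}))"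
    by (intro finite_cartesian_product finite_lists_length_eq) auto
  ultimately show ?thesis by (rule finite_subset)
qed

lemma map2_invol: "length Ss = length b \<Longrightarrow>
  map2 (\<lambda>S bj. bj \<noteq> a S) Ss (map2 (\<lambda>S bj. bj \<noteq> a S) Ss b) = b"
proof (induction Ss arbitrary: b)
  case Nil then show ?case by simp
next
  case (Cons S Ss)
  then obtain c b' where "b = c # b'" by (cases b) auto
  then show ?case using Cons by auto
qed

lemma om_invol: "u \<in> qbasis_set n c m \<Longrightarrow> oracle_map x (oracle_map x u) = u"
  using map2_invol[of _ _ "\<lambda>S. AND_S S x"] by (auto simp: oracle_map_def qbasis_set_def)

lemma om_in: "u \<in> qbasis_set n c m \<Longrightarrow> oracle_map x u \<in> qbasis_set n c m"
  by (auto simp: oracle_map_def qbasis_set_def)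

lemma om_bij: "bij_betw (oracle_map x) (qbasis_set n c m) (qbasis_set n c m)"
  by (rule bij_betw_byWitness[where f'="oracle_map x"]) (auto simp: om_invol om_in)

lemma om_fst[simp]: "fst (oracle_map x u) = fst u"
  by (auto simp: oracle_map_def split: prod.splits)

lemma reidx: "(\<Sum>u\<in>qbasis_set n c m. g (fst u) * h (oracle_map x u)) =
   (\<Sum>u\<in>qbasis_set n c m. g (fst u) * (h u :: real))"
proof -
  have "(\<Sum>u\<in>qbasis_set n c m. g (fst u) * h (oracle_map x u)) =
     (\<Sum>u\<in>qbasis_set n c m. (\<lambda>v. g (fst v) * h v) (oracle_map x u))" by simp
  also have "\<dots> = (\<Sum>u\<in>qbasis_set n c m. g (fst u) * h u)"
    by (rule sum.reindex_bij_betw[OF om_bij])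
  finally show ?thesis .
qed

definition nrm2 :: "qbasis set \<Rightarrow> (qbasis \<Rightarrow> complex) \<Rightarrow> real" where
  "nrm2 B v = (\<Sum>u\<in>B. (cmod (v u))\<^sup>2)"

lemma key_ident:
  assumes "finite B" "is_projector B P"
  shows "(\<Sum>u\<in>B. cnj (mat_apply B P v u) * mat_apply B P v u) =
         (\<Sum>u\<in>B. cnj (v u) * mat_apply B P v u)"
proof -
  have herm: "\<And>u w. u\<in>B \<Longrightarrow> w\<in>B \<Longrightarrow> cnj (P u w) = P w u"
    using assms(2) unfolding is_projector_def by (metis complex_cnj_cnj)
  have idem: "\<And>u w. u\<in>B \<Longrightarrow> w\<in>B \<Longrightarrow> (\<Sum>x\<in>B. P u x * P x w) = P u w"
    using assms(2) unfolding is_projector_def by blast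
  define Q where "Q = mat_apply B P v"
  have Qd: "Q u = (\<Sum>x\<in>B. P u x * v x)" for u unfolding Q_def mat_apply_def by simp
  have "(\<Sum>u\<in>B. cnj (Q u) * Q u) = (\<Sum>u\<in>B. (\<Sum>w\<in>B. P w u * cnj (v w)) * Q u)"
    by (rule sum.cong[OF refl]) (simp add: Qd herm)
  also have "\<dots> = (\<Sum>u\<in>B. \<Sum>w\<in>B. cnj (v w) * (P w u * Q u))"
    unfolding sum_distrib_right by (simp only: mult_ac)
  also have "\<dots> = (\<Sum>w\<in>B. \<Sum>u\<in>B. cnj (v w) * (P w u * Q u))"
    by (rule sum.swap)
  also have "\<dots> = (\<Sum>w\<in>B. cnj (v w) * (\<Sum>u\<in>B. P w u * Q u))"
    by (simp only: sum_distrib_left)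
  also have "\<dots> = (\<Sum>w\<in>B. cnj (v w) * Q w)"
  proof (rule sum.cong[OF refl])
    fix w assume w: "w \<in> B"
    have "(\<Sum>u\<in>B. P w u * Q u) = (\<Sum>u\<in>B. \<Sum>x\<in>B. P w u * P u x * v x)"
      unfolding Qd sum_distrib_left by (simp only: mult_ac)
    also have "\<dots> = (\<Sum>x\<in>B. \<Sum>u\<in>B. P w u * P u x * v x)" by (rule sum.swap)
    also have "\<dots> = (\<Sum>x\<in>B. (\<Sum>u\<in>B. P w u * P u x) * v x)"
      by (simp only: sum_distrib_right)
    also have "\<dots> = Q w" unfolding Qd by (rule sum.cong[OF refl]) (simp add: idem w)
    finally show "cnj (v w) * (\<Sum>u\<in>B. P w u * Q u) = cnj (v w) * Q w" by simp
  qed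
  finally show ?thesis unfolding Q_def .
qed

lemma contraction:
  assumes "finite B" "is_projector B P"
  shows "nrm2 B (mat_apply B P v) \<le> nrm2 B v"
proof -
  let ?Q = "mat_apply B P v"
  have sq: "\<And>z. complex_of_real ((cmod z)\<^sup>2) = cnj z * z"
    by (subst complex_norm_square) (rule mult.commute)
  define A where "A = (\<Sum>u\<in>B. cnj (v u) * ?Q u)"
  have qq: "complex_of_real (nrm2 B ?Q) = A"
    unfolding nrm2_def A_def of_real_sum sq using key_ident[OF assms] by simp
  have A2: "(\<Sum>u\<in>B. cnj (?Q u) * v u) = cnj A"
    unfolding A_def by (simp add: mult.commute)
  have "cnj A = A" using qq by (metis complex_cnj_complex_of_real)
  have "0 \<le> nrm2 B (\<lambda>u. v u - ?Q u)" unfolding nrm2_def by (simp add: sum_nonneg)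
  moreover have "complex_of_real (nrm2 B (\<lambda>u. v u - ?Q u)) =
      complex_of_real (nrm2 B v) - A - cnj A + complex_of_real (nrm2 B ?Q)"
    unfolding nrm2_def of_real_sum sq A_def[symmetric] A2[symmetric]
    by (simp add: algebra_simps sum.distrib sum_subtractf A_def)
  hence "complex_of_real (nrm2 B (\<lambda>u. v u - ?Q u)) = complex_of_real (nrm2 B v - nrm2 B ?Q)"
    using qq \<open>cnj A = A\<close> by simp
  hence "nrm2 B (\<lambda>u. v u - ?Q u) = nrm2 B v - nrm2 B ?Q" using of_real_eq_iff by blast
  ultimately show ?thesis by simp
qed

lemma pt1: "(cmod a)\<^sup>2 \<le> 3/2*(cmod b)\<^sup>2 + 3*(cmod (a-b))\<^sup>2"
proof -
  have "cmod a \<le> cmod b + cmod (a-b)" using norm_triangle_ineq[of b "a-b"] by simp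
  hence "(cmod a)\<^sup>2 \<le> (cmod b + cmod (a-b))\<^sup>2" by (simp add: power_mono)
  also have "\<dots> \<le> 3/2*(cmod b)\<^sup>2 + 3*(cmod (a-b))\<^sup>2"
    using zero_le_power2[of "cmod b - 2 * cmod (a-b)"] by (simp add: power2_eq_square algebra_simps)
  finally show ?thesis .
qed

lemma pt2: "(cmod (a-b))\<^sup>2 \<le> 2*(cmod a)\<^sup>2 + 2*(cmod b)\<^sup>2"
proof -
  have "cmod (a-b) \<le> cmod a + cmod b" by (rule norm_triangle_ineq4)
  hence "(cmod (a-b))\<^sup>2 \<le> (cmod a + cmod b)\<^sup>2" by (simp add: power_mono)
  also have "\<dots> \<le> 2*(cmod a)\<^sup>2 + 2*(cmod b)\<^sup>2"
    using zero_le_power2[of "cmod a - cmod b"] by (simp add: power2_eq_square algebra_simps)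
  finally show ?thesis .
qed

lemma gap:
  assumes "finite B" "is_projector B P" "nrm2 B (mat_apply B P f) \<ge> 2/3"
    "nrm2 B (mat_apply B P g) \<le> 1/3"
  shows "1/18 \<le> nrm2 B (\<lambda>u. f u - g u)"
proof -
  have lin: "mat_apply B P (\<lambda>u. f u - g u) u = mat_apply B P f u - mat_apply B P g u" for u
    by (simp add: mat_apply_def algebra_simps sum_subtractf)
  have "nrm2 B (mat_apply B P f) \<le> (\<Sum>u\<in>B. 3/2*(cmod (mat_apply B P g u))\<^sup>2
      + 3*(cmod (mat_apply B P f u - mat_apply B P g u))\<^sup>2)"
    unfolding nrm2_def by (rule sum_mono) (rule pt1)
  also have "\<dots> = 3/2 * nrm2 B (mat_apply B P g) + 3 * nrm2 B (mat_apply B P (\<lambda>u. f u - g u))"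
    unfolding nrm2_def lin by (simp add: sum.distrib sum_distrib_left)
  also have "\<dots> \<le> 3/2 * nrm2 B (mat_apply B P g) + 3 * nrm2 B (\<lambda>u. f u - g u)"
    using contraction[OF assms(1,2)] by simp
  finally show ?thesis using assms(3,4) by linarith
qed

definition xk :: "nat \<Rightarrow> nat \<Rightarrow> bool" where "xk k i = (k < i)"

definition ch :: "nat set list \<Rightarrow> nat \<Rightarrow> bool" where
  "ch Ss k = (\<exists>S\<in>set Ss. AND_S S (xk k) \<noteq> AND_S S (xk (Suc k)))"

definition ind :: "nat set list \<Rightarrow> nat \<Rightarrow> real" where
  "ind Ss k = (if ch Ss k then 1 else 0)"

lemma om_same: "\<not> ch (fst u) k \<Longrightarrow> oracle_map (xk k) u = oracle_map (xk (Suc k)) u"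
  unfolding oracle_map_def ch_def
  by (auto split: prod.splits intro!: map_cong dest: set_zip_leftD)

lemma Dk_bound:
  "nrm2 (qbasis_set n c m) (\<lambda>u. \<psi> (oracle_map (xk k) u) - \<psi> (oracle_map (xk (Suc k)) u))
   \<le> 4 * (\<Sum>u\<in>qbasis_set n c m. ind (fst u) k * (cmod (\<psi> u))\<^sup>2)"
proof -
  let ?B = "qbasis_set n c m"
  let ?h = "\<lambda>u. (cmod (\<psi> u))\<^sup>2"
  have "nrm2 ?B (\<lambda>u. \<psi> (oracle_map (xk k) u) - \<psi> (oracle_map (xk (Suc k)) u))
     \<le> (\<Sum>u\<in>?B. 2 * (ind (fst u) k * ?h (oracle_map (xk k) u))
           + 2 * (ind (fst u) k * ?h (oracle_map (xk (Suc k)) u)))"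
    unfolding nrm2_def
  proof (rule sum_mono)
    fix u
    show "(cmod (\<psi> (oracle_map (xk k) u) - \<psi> (oracle_map (xk (Suc k)) u)))\<^sup>2
      \<le> 2 * (ind (fst u) k * ?h (oracle_map (xk k) u))
           + 2 * (ind (fst u) k * ?h (oracle_map (xk (Suc k)) u))"
      using om_same[of u k] pt2 by (cases "ch (fst u) k") (auto simp: ind_def)
  qed
  also have "\<dots> = 2 * (\<Sum>u\<in>?B. ind (fst u) k * ?h (oracle_map (xk k) u))
       + 2 * (\<Sum>u\<in>?B. ind (fst u) k * ?h (oracle_map (xk (Suc k)) u))"
    by (simp add: sum.distrib sum_distrib_left)
  also have "\<dots> = 4 * (\<Sum>u\<in>?B. ind (fst u) k * ?h u)"
    using reidx[where g="\<lambda>Ss. ind Ss k" and h= ?h] by simp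
  finally show ?thesis .
qed

lemma count: "(\<Sum>k<n. ind Ss k) \<le> real (length Ss)"
proof -
  have "{k\<in>{..<n}. ch Ss k} \<subseteq> (\<lambda>S. (LEAST i. i \<in> S) - 1) ` set Ss"
  proof
    fix k assume "k \<in> {k\<in>{..<n}. ch Ss k}"
    then obtain S where S: "S \<in> set Ss" "AND_S S (xk k) \<noteq> AND_S S (xk (Suc k))"
      unfolding ch_def by auto
    have "AND_S S (xk (Suc k)) \<Longrightarrow> AND_S S (xk k)" unfolding AND_S_def xk_def by auto
    hence "AND_S S (xk k) \<and> \<not> AND_S S (xk (Suc k))" using S(2) by blast
    hence a: "\<forall>i\<in>S. k < i" and "\<exists>i\<in>S. \<not> Suc k < i" unfolding AND_S_def xk_def by auto
    hence "Suc k \<in> S" by (metis Suc_lessI not_less_eq)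
    hence "(LEAST i. i \<in> S) = Suc k" using a by (intro Least_equality) auto
    thus "k \<in> (\<lambda>S. (LEAST i. i \<in> S) - 1) ` set Ss" using S(1) by force
  qed
  hence "card {k\<in>{..<n}. ch Ss k} \<le> card ((\<lambda>S. (LEAST i. i \<in> S) - 1) ` set Ss)"
    by (intro card_mono) auto
  also have "\<dots> \<le> length Ss" using card_image_le[of "set Ss"] card_length[of Ss] by (meson finite_set le_trans)
  finally have "card {k\<in>{..<n}. ch Ss k} \<le> length Ss" .
  moreover have "(\<Sum>k<n. ind Ss k) = real (card {k\<in>{..<n}. ch Ss k})"
    unfolding ind_def by (simp add: sum.If_cases Int_def)
  ultimately show ?thesis by simp
qed

lemma OMB_xk: "k \<le> n \<Longrightarrow> OMB n (xk k) = (1 \<le> k \<and> odd k)"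
proof -
  assume "k \<le> n"
  have e: "{i\<in>{1..n}. \<not> xk k i} = {1..k}" using \<open>k \<le> n\<close> by (auto simp: xk_def)
  show ?thesis
  proof (cases "k = 0")
    case True thus ?thesis unfolding OMB_def by (auto simp: xk_def)
  next
    case False
    hence "Max {1..k} = k" by (intro Max_eqI) auto
    moreover have "\<exists>i\<in>{1..n}. \<not> xk k i" using False \<open>k \<le> n\<close> by (auto simp: xk_def intro!: bexI[of _ k])
    ultimately show ?thesis unfolding OMB_def e using False by auto
  qed
qed

lemma OMB_cong: "(\<forall>i\<in>{1..n}. y i = x i) \<Longrightarrow> OMB n y = OMB n x"
proof -
  assume h: "\<forall>i\<in>{1..n}. y i = x i"
  hence "{i\<in>{1..n}. \<not> y i} = {i\<in>{1..n}. \<not> x i}" by auto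
  thus ?thesis unfolding OMB_def using h by auto
qed

lemma exists_alg: "qnaadt_computes n (OMB n) n"
proof -
  define Ss0 where "Ss0 = map (\<lambda>i. {Suc i}) [0..<n]"
  define u0 where "u0 = (Ss0, replicate n False, 0::nat)"
  define B where "B = qbasis_set n n 1"
  define \<psi> where "\<psi> = (\<lambda>u. if u = u0 then (1::complex) else 0)"
  define d where "d = (\<lambda>u::qbasis. OMB n (\<lambda>i. fst (snd u) ! (i - 1)))"
  define P where "P = (\<lambda>u v. if u = v \<and> d u then (1::complex) else 0)"
  have u0B: "u0 \<in> B" by (auto simp: u0_def B_def Ss0_def qbasis_set_def)
  have finB: "finite B" unfolding B_def by (rule finite_qb)
  have unit: "is_unit_state B \<psi>"
  proof -
    have "(\<Sum>u\<in>B. (cmod (\<psi> u))\<^sup>2) = (\<Sum>u\<in>B. if u = u0 then 1 else 0)"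
      by (rule sum.cong) (auto simp: \<psi>_def)
    also have "\<dots> = 1" using u0B finB by simp
    finally show ?thesis unfolding is_unit_state_def using u0B by (auto simp: \<psi>_def)
  qed
  have proj: "is_projector B P"
  proof -
    have "(\<Sum>w\<in>B. P u w * P w v) = P u v" if "u \<in> B" for u v
    proof -
      have "(\<Sum>w\<in>B. P u w * P w v) = (\<Sum>w\<in>B. if u = w then P u v else 0)"
        by (rule sum.cong) (auto simp: P_def)
      thus ?thesis using that finB by simp
    qed
    thus ?thesis unfolding is_projector_def by (auto simp: P_def)
  qed
  have acc: "accept_prob B P \<psi> x = (if OMB n x then 1 else 0)" for x
  proof -
    define u1 where "u1 = oracle_map x u0"
    have u1B: "u1 \<in> B" unfolding u1_def B_def using u0B om_in unfolding B_def by blast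
    have phi: "apply_oracle x \<psi> v = (if v = u1 then 1 else 0)" if "v \<in> B" for v
    proof -
      have "oracle_map x v = u0 \<longleftrightarrow> v = u1"
        using om_invol[of v n n 1 x] om_invol[of u0 n n 1 x] that u0B unfolding u1_def B_def by metis
      thus ?thesis by (auto simp: apply_oracle_def \<psi>_def)
    qed
    have ma: "mat_apply B P (apply_oracle x \<psi>) u = P u u1" for u
    proof -
      have "mat_apply B P (apply_oracle x \<psi>) u = (\<Sum>v\<in>B. if v = u1 then P u u1 else 0)"
        unfolding mat_apply_def by (rule sum.cong) (auto simp: phi)
      thus ?thesis using u1B finB by simp
    qed
    have "accept_prob B P \<psi> x = (\<Sum>u\<in>B. if u = u1 then (if d u1 then 1 else 0) else 0)"
      unfolding accept_prob_def ma by (rule sum.cong) (auto simp: P_def)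
    also have "\<dots> = (if d u1 then 1 else 0)" using u1B finB by simp
    also have "d u1 = OMB n x"
    proof -
      have "fst (snd u1) ! (i - 1) = x i" if "i \<in> {1..n}" for i
        using that by (auto simp: u1_def u0_def oracle_map_def Ss0_def AND_S_def)
      thus ?thesis unfolding d_def by (intro OMB_cong) auto
    qed
    finally show ?thesis .
  qed
  show ?thesis unfolding qnaadt_computes_def
    using unit proj acc unfolding B_def by (intro exI[of _ 1] exI[of _ \<psi>] exI[of _ P]) auto
qed

lemma lower:
  assumes "qnaadt_computes n (OMB n) c"
  shows "real n \<le> 72 * real c"
proof -
  obtain m \<psi> P where U: "is_unit_state (qbasis_set n c m) \<psi>"
    and Pr: "is_projector (qbasis_set n c m) P"
    and cor: "\<forall>x. (OMB n x \<longrightarrow> accept_prob (qbasis_set n c m) P \<psi> x \<ge> 2/3) \<and>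
           (\<not> OMB n x \<longrightarrow> accept_prob (qbasis_set n c m) P \<psi> x \<le> 1/3)"
    using assms unfolding qnaadt_computes_def by blast
  define B where "B = qbasis_set n c m"
  have finB: "finite B" unfolding B_def by (rule finite_qb)
  define \<phi> where "\<phi> = (\<lambda>k u. \<psi> (oracle_map (xk k) u))"
  define D where "D = (\<lambda>k. nrm2 B (\<lambda>u. \<phi> k u - \<phi> (Suc k) u))"
  have pk: "accept_prob B P \<psi> (xk k) = nrm2 B (mat_apply B P (\<phi> k))" for k
    unfolding accept_prob_def nrm2_def \<phi>_def apply_oracle_def by (simp add: comp_def)
  have Dlow: "1/18 \<le> D k" if "k < n" for k
  proof (cases "odd k")
    case True
    have "k \<ge> 1" using True by (cases k) auto
    have "OMB n (xk k)" "\<not> OMB n (xk (Suc k))" using OMB_xk[of k n] OMB_xk[of "Suc k" n] that True \<open>k \<ge> 1\<close>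
      by auto
    hence a1: "2/3 \<le> nrm2 B (mat_apply B P (\<phi> k))"
      and a2: "nrm2 B (mat_apply B P (\<phi> (Suc k))) \<le> 1/3"
      using cor pk unfolding B_def by (metis, metis)
    have PB: "is_projector B P" using Pr by (simp add: B_def)
    show ?thesis unfolding D_def by (rule gap[OF finB PB a1 a2])
  next
    case False
    have "\<not> OMB n (xk k)" "OMB n (xk (Suc k))" using OMB_xk[of k n] OMB_xk[of "Suc k" n] that False
      by auto
    hence a1: "2/3 \<le> nrm2 B (mat_apply B P (\<phi> (Suc k)))"
      and a2: "nrm2 B (mat_apply B P (\<phi> k)) \<le> 1/3"
      using cor pk unfolding B_def by (metis, metis)
    have PB: "is_projector B P" using Pr by (simp add: B_def)
    have "1/18 \<le> nrm2 B (\<lambda>u. \<phi> (Suc k) u - \<phi> k u)" by (rule gap[OF finB PB a1 a2])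
    also have "nrm2 B (\<lambda>u. \<phi> (Suc k) u - \<phi> k u) = D k"
      unfolding D_def nrm2_def by (simp add: norm_minus_commute)
    finally show ?thesis .
  qed
  let ?h = "\<lambda>u. (cmod (\<psi> u))\<^sup>2"
  have "real n / 18 = (\<Sum>k<n. 1/18)" by simp
  also have "\<dots> \<le> (\<Sum>k<n. D k)" by (rule sum_mono) (rule Dlow, simp)
  also have "\<dots> \<le> (\<Sum>k<n. 4 * (\<Sum>u\<in>B. ind (fst u) k * ?h u))"
    by (rule sum_mono) (unfold D_def \<phi>_def B_def, rule Dk_bound)
  also have "\<dots> = 4 * (\<Sum>u\<in>B. ?h u * (\<Sum>k<n. ind (fst u) k))"
    by (simp add: sum_distrib_left sum_distrib_right sum.swap[of _ B] mult_ac)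
  also have "\<dots> \<le> 4 * (\<Sum>u\<in>B. ?h u * real c)"
  proof -
    have "(\<Sum>u\<in>B. ?h u * (\<Sum>k<n. ind (fst u) k)) \<le> (\<Sum>u\<in>B. ?h u * real c)"
    proof (rule sum_mono)
      fix u assume "u \<in> B"
      hence "length (fst u) = c" unfolding B_def qbasis_set_def by auto
      thus "?h u * (\<Sum>k<n. ind (fst u) k) \<le> ?h u * real c"
        using count[where n=n and Ss="fst u"] by (intro mult_left_mono) auto
    qed
    thus ?thesis by simp
  qed
  also have "\<dots> = 4 * real c"
    using U unfolding is_unit_state_def B_def by (simp add: sum_distrib_right[symmetric])
  finally show ?thesis by simp
qed

theorem theorem4p2:
  shows "\<exists>C::real > 0. \<forall>n::nat \<ge> 1. real (QNAADT n (OMB n)) \<ge> C * real n"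
proof (intro exI[of _ "1/72"] conjI allI impI)
  fix n :: nat assume "n \<ge> 1"
  have "qnaadt_computes n (OMB n) (QNAADT n (OMB n))"
    unfolding QNAADT_def by (rule LeastI[OF exists_alg])
  from lower[OF this] show "1/72 * real n \<le> real (QNAADT n (OMB n))" by simp
qed simp

end
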